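(* For $n\ge 1$, let $N(n)$ be the number of words $u\in\{0,1\}^*$ that begin and end with $1$ (the word $u=1$ is allowed), contain exactly $n$ occurrences of $1$, and are such that the configuration $0u0$ can be reduced to a single peg. Then \[ N(n)=\begin{cases}1 & n=1,\\ 1 & n=2,\\ 2 & n=3,\\ n^2-7n+15 & n\ge 4,\ n \text{ even},\\ n^2-7n+16 & n\ge 5,\ n\text{ odd}.\end{cases} \]
   Context: One-dimensional Peg Solitaire: a configuration is a finite word $w=c_0c_1\cdots c_{n-1}\in\{0,1\}^*$, describing a row of $n$ consecutive sites, where $c_i=1$ means site $i$ holds a peg and $c_i=0$ means site $i$ is a hole. The board consists exactly of these sites (no sites outside the word may be used). A move (hop) takes three consecutive sites $i,i+1,i+2$ within the board such that one end site and the middle site hold pegs and the other end site is a hole, moves the end peg to the hole, and removes the middle peg (i.e. $110\to001$ or $011\to100$). A configuration can be reduced to a single peg if some sequence of hops leads to a configuration with exactly one peg. *)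

theory Defs
  imports Main
begin

text \<open>A configuration is a list of booleans; True = peg, False = hole.
  The board consists exactly of the sites of the list.\<close>

definition hop :: "bool list \<Rightarrow> bool list \<Rightarrow> bool" where
  "hop c d \<longleftrightarrow> (\<exists>i. i + 2 < length c \<and>
     ((c ! i \<and> c ! (i+1) \<and> \<not> c ! (i+2) \<and> d = c[i := False, i+1 := False, i+2 := True]) \<or>
      (\<not> c ! i \<and> c ! (i+1) \<and> c ! (i+2) \<and> d = c[i := True, i+1 := False, i+2 := False])))"

definition num_pegs :: "bool list \<Rightarrow> nat" where
  "num_pegs c = length (filter id c)"

definition reducible_to_one :: "bool list \<Rightarrow> bool" where
  "reducible_to_one c \<longleftrightarrow> (\<exists>d. hop\<^sup>*\<^sup>* c d \<and> num_pegs d = 1)"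

definition N :: "nat \<Rightarrow> nat" where
  "N n = card {u. u \<noteq> [] \<and> hd u \<and> last u \<and> num_pegs u = n
                 \<and> reducible_to_one ([False] @ u @ [False])}"

end

theory Submission
  imports Defs
begin

datatype st = Q0 | Q1 | Q2 | Q3 | Q4 | Q5 | Q6 | Q7 | Q8 | Q9 | Q10 | Q11 | Q12 | Q13 | Q14 | Q15 | Q16 | Q17
fun D :: "st \<Rightarrow> bool \<Rightarrow> st" where
  "D Q0 a = (if a then Q2 else Q1)" |
  "D Q1 a = (if a then Q3 else Q1)" |
  "D Q2 a = (if a then Q5 else Q4)" |
  "D Q3 a = (if a then Q6 else Q4)" |
  "D Q4 a = (if a then Q8 else Q7)" |
  "D Q5 a = (if a then Q9 else Q3)" |
  "D Q6 a = (if a then Q9 else Q3)" |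
  "D Q7 a = (if a then Q10 else Q7)" |
  "D Q8 a = (if a then Q4 else Q11)" |
  "D Q9 a = (if a then Q13 else Q12)" |
  "D Q10 a = (if a then Q10 else Q10)" |
  "D Q11 a = (if a then Q14 else Q10)" |
  "D Q12 a = (if a then Q15 else Q10)" |
  "D Q13 a = (if a then Q16 else Q8)" |
  "D Q14 a = (if a then Q7 else Q11)" |
  "D Q15 a = (if a then Q11 else Q10)" |
  "D Q16 a = (if a then Q17 else Q12)" |
  "D Q17 a = (if a then Q16 else Q14)"
definition all_st :: "st list" where "all_st = [Q0, Q1, Q2, Q3, Q4, Q5, Q6, Q7, Q8, Q9, Q10, Q11, Q12, Q13, Q14, Q15, Q16, Q17]"

definition acc :: "st \<Rightarrow> bool" where
  "acc q \<longleftrightarrow> q \<in> {Q2, Q3, Q4, Q6, Q7}"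

definition run :: "st \<Rightarrow> bool list \<Rightarrow> st" where
  "run q w = foldl D q w"

lemma run_Nil[simp]: "run q [] = q" by (simp add: run_def)
lemma run_Cons[simp]: "run q (a # w) = run (D q a) w" by (simp add: run_def)
lemma run_append[simp]: "run q (x @ y) = run (run q x) y" by (simp add: run_def)

definition lepairs :: "(st \<times> st) list" where
  "lepairs = [(Q0,Q0), (Q0,Q1), (Q1,Q1), (Q2,Q2), (Q2,Q3), (Q3,Q3), (Q4,Q4), (Q5,Q5), (Q5,Q6), (Q6,Q6), (Q7,Q2), (Q7,Q3), (Q7,Q4), (Q7,Q6), (Q7,Q7), (Q8,Q8), (Q9,Q9), (Q10,Q0), (Q10,Q1), (Q10,Q2), (Q10,Q3), (Q10,Q4), (Q10,Q5), (Q10,Q6), (Q10,Q7), (Q10,Q8), (Q10,Q9), (Q10,Q10), (Q10,Q11), (Q10,Q12), (Q10,Q13), (Q10,Q14), (Q10,Q15), (Q10,Q16), (Q10,Q17), (Q11,Q1), (Q11,Q4), (Q11,Q11), (Q12,Q4), (Q12,Q12), (Q13,Q13), (Q14,Q0), (Q14,Q1), (Q14,Q3), (Q14,Q8), (Q14,Q14), (Q15,Q8), (Q15,Q15), (Q16,Q2), (Q16,Q3), (Q16,Q9), (Q16,Q16), (Q17,Q0), (Q17,Q1), (Q17,Q5), (Q17,Q6), (Q17,Q13), (Q17,Q17)]"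

definition le :: "st \<Rightarrow> st \<Rightarrow> bool" where
  "le s t \<longleftrightarrow> (s, t) \<in> set lepairs"

lemma all_st: "q \<in> set all_st"
  by (cases q) (simp_all add: all_st_def)

lemma le_check: "list_all (\<lambda>s. list_all (\<lambda>t. le s t \<longrightarrow> ((acc s \<longrightarrow> acc t) \<and> le (D s True) (D t True) \<and> le (D s False) (D t False))) all_st) all_st"
  by code_simp

lemma hop_check: "list_all (\<lambda>q. le (run q [False, False, True]) (run q [True, True, False]) \<and> le (run q [True, False, False]) (run q [False, True, True])) all_st"
  by code_simp

lemma le_step: "le s t \<Longrightarrow> (acc s \<longrightarrow> acc t) \<and> le (D s a) (D t a)"
  using le_check all_st[of s] all_st[of t] by (cases a) (auto simp: list_all_iff)

lemma le_run: "le s t \<Longrightarrow> acc (run s y) \<Longrightarrow> acc (run t y)"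
proof (induction y arbitrary: s t)
  case Nil then show ?case using le_step by auto
next
  case (Cons a y) then show ?case using le_step[of s t a] by auto
qed

definition pat :: "bool \<Rightarrow> bool list" where
  "pat b = (if b then [True, True, False] else [False, True, True])"
definition pat' :: "bool \<Rightarrow> bool list" where
  "pat' b = (if b then [False, False, True] else [True, False, False])"

lemma hop_split:
  assumes "hop c d"
  shows "\<exists>x y b. c = x @ pat b @ y \<and> d = x @ pat' b @ y"
proof -
  obtain i where i: "i + 2 < length c" and
    h: "(c ! i \<and> c ! (i+1) \<and> \<not> c ! (i+2) \<and> d = c[i := False, i+1 := False, i+2 := True]) \<or>
      (\<not> c ! i \<and> c ! (i+1) \<and> c ! (i+2) \<and> d = c[i := True, i+1 := False, i+2 := False])"
    using assms unfolding hop_def by blast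
  define x where "x = take i c"
  have lx: "length x = i" using i by (simp add: x_def)
  define a1 where "a1 = c ! i"
  define a2 where "a2 = c ! (i+1)"
  define a3 where "a3 = c ! (i+2)"
  define y where "y = drop (i+3) c"
  have r: "drop i c = a1 # a2 # a3 # y"
    unfolding a1_def a2_def a3_def y_def using i
    by (simp add: Cons_nth_drop_Suc numeral_3_eq_3)
  have c: "c = x @ a1 # a2 # a3 # y" using r x_def by (metis append_take_drop_id)
  from h show ?thesis
  proof
    assume H: "c ! i \<and> c ! (i+1) \<and> \<not> c ! (i+2) \<and> d = c[i := False, i+1 := False, i+2 := True]"
    then have "a1 \<and> a2 \<and> \<not> a3 \<and> d = x @ False # False # True # y"
      unfolding c using lx by (simp add: nth_append list_update_append)
    then show ?thesis using c by (intro exI[of _ x] exI[of _ y] exI[of _ True]) (simp add: pat_def pat'_def)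
  next
    assume H: "\<not> c ! i \<and> c ! (i+1) \<and> c ! (i+2) \<and> d = c[i := True, i+1 := False, i+2 := False]"
    then have "\<not> a1 \<and> a2 \<and> a3 \<and> d = x @ True # False # False # y"
      unfolding c using lx by (simp add: nth_append list_update_append)
    then show ?thesis using c by (intro exI[of _ x] exI[of _ y] exI[of _ False]) (simp add: pat_def pat'_def)
  qed
qed

lemma hop_intro: "hop (x @ pat b @ y) (x @ pat' b @ y)"
  unfolding hop_def
  by (rule exI[of _ "length x"]) (cases b; simp add: pat_def pat'_def nth_append list_update_append)

lemma hop_back: "hop c d \<Longrightarrow> acc (run Q0 d) \<Longrightarrow> acc (run Q0 c)"
proof -
  assume "hop c d" "acc (run Q0 d)"
  then obtain x y b where c: "c = x @ pat b @ y" and d: "d = x @ pat' b @ y"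
    using hop_split by blast
  have "le (run (run Q0 x) (pat' b)) (run (run Q0 x) (pat b))"
    using hop_check all_st[of "run Q0 x"] by (cases b) (auto simp: list_all_iff pat_def pat'_def)
  then show ?thesis using \<open>acc (run Q0 d)\<close> c d le_run by auto
qed

lemma run_zeros: "\<forall>a\<in>set w. \<not> a \<Longrightarrow> q \<in> {Q2,Q3,Q4,Q7} \<Longrightarrow> run q w \<in> {Q2,Q3,Q4,Q7}"
proof (induction w arbitrary: q)
  case Nil then show ?case by simp
next
  case (Cons a w)
  have "D q a \<in> {Q2,Q3,Q4,Q7}" using Cons.prems by (elim insertE) auto
  moreover have "\<forall>b\<in>set w. \<not> b" using Cons.prems by auto
  ultimately show ?case using Cons.IH by simp
qed

lemma run_zeros0: "\<forall>a\<in>set w. \<not> a \<Longrightarrow> q \<in> {Q0,Q1} \<Longrightarrow> run q w \<in> {Q0,Q1}"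
proof (induction w arbitrary: q)
  case Nil then show ?case by simp
next
  case (Cons a w)
  have "D q a \<in> {Q0,Q1}" using Cons.prems by (elim insertE) auto
  moreover have "\<forall>b\<in>set w. \<not> b" using Cons.prems by auto
  ultimately show ?case using Cons.IH by simp
qed

lemma num_pegs_Nil[simp]: "num_pegs [] = 0" by (simp add: num_pegs_def)
lemma num_pegs_Cons[simp]: "num_pegs (a # d) = (if a then 1 else 0) + num_pegs d"
  by (simp add: num_pegs_def)
lemma num_pegs_append[simp]: "num_pegs (x @ y) = num_pegs x + num_pegs y"
  by (simp add: num_pegs_def)
lemma num_pegs_zero: "num_pegs d = 0 \<longleftrightarrow> (\<forall>b\<in>set d. \<not> b)"
  by (induction d) auto

lemma one_peg_run: "q \<in> {Q0,Q1} \<Longrightarrow> num_pegs d = 1 \<Longrightarrow> run q d \<in> {Q2,Q3,Q4,Q7}"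
proof (induction d arbitrary: q)
  case Nil then show ?case by simp
next
  case (Cons a d)
  show ?case
  proof (cases a)
    case True
    then have z: "\<forall>b\<in>set d. \<not> b" using Cons.prems num_pegs_zero by auto
    have "D q True \<in> {Q2,Q3,Q4,Q7}" using Cons.prems(1) by (elim insertE) auto
    then show ?thesis using True run_zeros[OF z] by simp
  next
    case False
    have "D q False \<in> {Q0,Q1}" using Cons.prems(1) by (elim insertE) auto
    moreover have "num_pegs d = 1" using False Cons.prems(2) by simp
    ultimately show ?thesis using False Cons.IH by simp
  qed
qed

lemma one_peg_acc: "num_pegs d = 1 \<Longrightarrow> acc (run Q0 d)"
  using one_peg_run[of Q0 d] by (auto simp: acc_def)

lemma reducible_acc: "reducible_to_one c \<Longrightarrow> acc (run Q0 c)"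
proof -
  assume "reducible_to_one c"
  then obtain d where r: "hop\<^sup>*\<^sup>* c d" and "num_pegs d = 1" by (auto simp: reducible_to_one_def)
  then have "acc (run Q0 d)" using one_peg_acc by blast
  from r this show ?thesis
  proof (induction rule: converse_rtranclp_induct)
    case base then show ?case by simp
  next
    case (step y z) then show ?case using hop_back by blast
  qed
qed

datatype slot = Done st | Pend nat bool st

fun step_slot :: "slot \<Rightarrow> bool \<Rightarrow> slot list" where
  "step_slot (Done q) a = [Done (D q a)]"
| "step_slot (Pend k b q) a = (if a = pat b ! k then (if k = 2 then [Done (D q (pat' b ! 2))]
      else [Pend (Suc k) b (D q (pat' b ! k))]) else [])"

definition succ :: "st \<Rightarrow> slot list \<Rightarrow> bool \<Rightarrow> slot list" where
  "succ p S a = [Pend 1 b (D p (pat' b ! 0)). b \<leftarrow> [True, False], a = pat b ! 0] @ concat (map (\<lambda>s. step_slot s a) S)"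

datatype mst = M0 | M1 | M2 | M3 | M4 | M5 | M6 | M7 | M8 | M9 | M10 | M11 | M12 | M13 | M14 | M15 | M16 | M17 | M18 | M19 | M20 | M21 | M22 | M23 | M24 | M25 | M26 | M27 | M28 | M29 | M30 | M31 | M32 | M33 | M34 | M35 | M36 | M37 | M38 | M39 | M40 | M41 | M42 | M43 | M44 | M45 | M46 | M47 | M48 | M49 | M50 | M51 | M52 | M53 | M54 | M55 | M56 | M57 | M58 | M59 | M60

definition all_m :: "mst list" where "all_m = [M0, M1, M2, M3, M4, M5, M6, M7, M8, M9, M10, M11, M12, M13, M14, M15, M16, M17, M18, M19, M20, M21, M22, M23, M24, M25, M26, M27, M28, M29, M30, M31, M32, M33, M34, M35, M36, M37, M38, M39, M40, M41, M42, M43, M44, M45, M46, M47, M48, M49, M50, M51, M52, M53, M54, M55, M56, M57, M58, M59, M60]"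

fun mnext :: "mst \<Rightarrow> bool \<Rightarrow> mst" where
  "mnext M0 a = (if a then M2 else M1)" |
  "mnext M1 a = (if a then M4 else M3)" |
  "mnext M2 a = (if a then M6 else M5)" |
  "mnext M3 a = (if a then M4 else M3)" |
  "mnext M4 a = (if a then M8 else M7)" |
  "mnext M5 a = (if a then M10 else M9)" |
  "mnext M6 a = (if a then M12 else M11)" |
  "mnext M7 a = (if a then M10 else M9)" |
  "mnext M8 a = (if a then M12 else M13)" |
  "mnext M9 a = (if a then M15 else M14)" |
  "mnext M10 a = (if a then M17 else M16)" |
  "mnext M11 a = (if a then M19 else M18)" |
  "mnext M12 a = (if a then M21 else M20)" |
  "mnext M13 a = (if a then M19 else M22)" |
  "mnext M14 a = (if a then M23 else M14)" |
  "mnext M15 a = (if a then M25 else M24)" |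
  "mnext M16 a = (if a then M27 else M26)" |
  "mnext M17 a = (if a then M29 else M28)" |
  "mnext M18 a = (if a then M30 else M28)" |
  "mnext M19 a = (if a then M31 else M11)" |
  "mnext M20 a = (if a then M33 else M32)" |
  "mnext M21 a = (if a then M35 else M34)" |
  "mnext M22 a = (if a then M30 else M28)" |
  "mnext M23 a = (if a then M25 else M24)" |
  "mnext M24 a = (if a then M24 else M24)" |
  "mnext M25 a = (if a then M24 else M24)" |
  "mnext M26 a = (if a then M36 else M24)" |
  "mnext M27 a = (if a then M38 else M37)" |
  "mnext M28 a = (if a then M15 else M39)" |
  "mnext M29 a = (if a then M17 else M40)" |
  "mnext M30 a = (if a then M17 else M40)" |
  "mnext M31 a = (if a then M42 else M41)" |
  "mnext M32 a = (if a then M24 else M24)" |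
  "mnext M33 a = (if a then M44 else M43)" |
  "mnext M34 a = (if a then M45 else M40)" |
  "mnext M35 a = (if a then M47 else M46)" |
  "mnext M36 a = (if a then M24 else M24)" |
  "mnext M37 a = (if a then M27 else M26)" |
  "mnext M38 a = (if a then M23 else M39)" |
  "mnext M39 a = (if a then M23 else M39)" |
  "mnext M40 a = (if a then M48 else M26)" |
  "mnext M41 a = (if a then M49 else M32)" |
  "mnext M42 a = (if a then M50 else M34)" |
  "mnext M43 a = (if a then M24 else M24)" |
  "mnext M44 a = (if a then M51 else M26)" |
  "mnext M45 a = (if a then M29 else M28)" |
  "mnext M46 a = (if a then M52 else M32)" |
  "mnext M47 a = (if a then M54 else M53)" |
  "mnext M48 a = (if a then M38 else M55)" |
  "mnext M49 a = (if a then M44 else M43)" |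
  "mnext M50 a = (if a then M57 else M56)" |
  "mnext M51 a = (if a then M38 else M55)" |
  "mnext M52 a = (if a then M44 else M43)" |
  "mnext M53 a = (if a then M58 else M55)" |
  "mnext M54 a = (if a then M47 else M46)" |
  "mnext M55 a = (if a then M48 else M26)" |
  "mnext M56 a = (if a then M59 else M32)" |
  "mnext M57 a = (if a then M60 else M53)" |
  "mnext M58 a = (if a then M23 else M39)" |
  "mnext M59 a = (if a then M44 else M43)" |
  "mnext M60 a = (if a then M57 else M56)"

fun mp :: "mst \<Rightarrow> st" where
  "mp M0 = Q0" |
  "mp M1 = Q1" |
  "mp M2 = Q2" |
  "mp M3 = Q1" |
  "mp M4 = Q3" |
  "mp M5 = Q4" |
  "mp M6 = Q5" |
  "mp M7 = Q4" |
  "mp M8 = Q6" |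
  "mp M9 = Q7" |
  "mp M10 = Q8" |
  "mp M11 = Q3" |
  "mp M12 = Q9" |
  "mp M13 = Q3" |
  "mp M14 = Q7" |
  "mp M15 = Q10" |
  "mp M16 = Q11" |
  "mp M17 = Q4" |
  "mp M18 = Q4" |
  "mp M19 = Q6" |
  "mp M20 = Q12" |
  "mp M21 = Q13" |
  "mp M22 = Q4" |
  "mp M23 = Q10" |
  "mp M24 = Q10" |
  "mp M25 = Q10" |
  "mp M26 = Q10" |
  "mp M27 = Q14" |
  "mp M28 = Q7" |
  "mp M29 = Q8" |
  "mp M30 = Q8" |
  "mp M31 = Q9" |
  "mp M32 = Q10" |
  "mp M33 = Q15" |
  "mp M34 = Q8" |
  "mp M35 = Q16" |
  "mp M36 = Q10" |
  "mp M37 = Q11" |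
  "mp M38 = Q7" |
  "mp M39 = Q7" |
  "mp M40 = Q11" |
  "mp M41 = Q12" |
  "mp M42 = Q13" |
  "mp M43 = Q10" |
  "mp M44 = Q11" |
  "mp M45 = Q4" |
  "mp M46 = Q12" |
  "mp M47 = Q17" |
  "mp M48 = Q14" |
  "mp M49 = Q15" |
  "mp M50 = Q16" |
  "mp M51 = Q14" |
  "mp M52 = Q15" |
  "mp M53 = Q14" |
  "mp M54 = Q16" |
  "mp M55 = Q11" |
  "mp M56 = Q12" |
  "mp M57 = Q17" |
  "mp M58 = Q7" |
  "mp M59 = Q15" |
  "mp M60 = Q16"

fun mc :: "mst \<Rightarrow> nat" where
  "mc M0 = 0" |
  "mc M1 = 0" |
  "mc M2 = 1" |
  "mc M3 = 0" |
  "mc M4 = 1" |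
  "mc M5 = 1" |
  "mc M6 = 2" |
  "mc M7 = 1" |
  "mc M8 = 2" |
  "mc M9 = 1" |
  "mc M10 = 2" |
  "mc M11 = 2" |
  "mc M12 = 2" |
  "mc M13 = 2" |
  "mc M14 = 1" |
  "mc M15 = 2" |
  "mc M16 = 2" |
  "mc M17 = 2" |
  "mc M18 = 2" |
  "mc M19 = 2" |
  "mc M20 = 2" |
  "mc M21 = 2" |
  "mc M22 = 2" |
  "mc M23 = 2" |
  "mc M24 = 2" |
  "mc M25 = 2" |
  "mc M26 = 2" |
  "mc M27 = 2" |
  "mc M28 = 2" |
  "mc M29 = 2" |
  "mc M30 = 2" |
  "mc M31 = 2" |
  "mc M32 = 2" |
  "mc M33 = 2" |
  "mc M34 = 2" |
  "mc M35 = 2" |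
  "mc M36 = 2" |
  "mc M37 = 2" |
  "mc M38 = 2" |
  "mc M39 = 2" |
  "mc M40 = 2" |
  "mc M41 = 2" |
  "mc M42 = 2" |
  "mc M43 = 2" |
  "mc M44 = 2" |
  "mc M45 = 2" |
  "mc M46 = 2" |
  "mc M47 = 2" |
  "mc M48 = 2" |
  "mc M49 = 2" |
  "mc M50 = 2" |
  "mc M51 = 2" |
  "mc M52 = 2" |
  "mc M53 = 2" |
  "mc M54 = 2" |
  "mc M55 = 2" |
  "mc M56 = 2" |
  "mc M57 = 2" |
  "mc M58 = 2" |
  "mc M59 = 2" |
  "mc M60 = 2"

fun msl :: "mst \<Rightarrow> slot list" where
  "msl M0 = []" |
  "msl M1 = [Pend 1 False Q2]" |
  "msl M2 = [Pend 1 True Q1]" |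
  "msl M3 = [Pend 1 False Q3]" |
  "msl M4 = [Pend 1 True Q1, Pend 2 False Q4]" |
  "msl M5 = [Pend 1 False Q5]" |
  "msl M6 = [Pend 1 True Q4, Pend 2 True Q1]" |
  "msl M7 = [Pend 1 False Q6]" |
  "msl M8 = [Done Q7, Pend 1 True Q4, Pend 2 True Q1]" |
  "msl M9 = [Pend 1 False Q8]" |
  "msl M10 = [Pend 1 True Q7, Pend 2 False Q3]" |
  "msl M11 = [Done Q3, Pend 1 False Q9]" |
  "msl M12 = [Pend 1 True Q3, Pend 2 True Q7]" |
  "msl M13 = [Done Q3, Done Q7, Pend 1 False Q9]" |
  "msl M14 = []" |
  "msl M15 = [Pend 1 True Q7, Pend 2 False Q11]" |
  "msl M16 = [Pend 1 False Q4]" |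
  "msl M17 = [Done Q4, Pend 1 True Q11, Pend 2 True Q7]" |
  "msl M18 = [Done Q4, Pend 1 False Q6]" |
  "msl M19 = [Done Q6, Pend 1 True Q4, Pend 2 False Q12]" |
  "msl M20 = [Pend 1 False Q13]" |
  "msl M21 = [Pend 1 True Q12, Pend 2 True Q4]" |
  "msl M22 = [Done Q4, Done Q7, Pend 1 False Q6]" |
  "msl M23 = [Pend 1 True Q7]" |
  "msl M24 = []" |
  "msl M25 = [Pend 2 True Q7]" |
  "msl M26 = [Pend 1 False Q14]" |
  "msl M27 = [Pend 2 False Q7]" |
  "msl M28 = [Done Q7, Pend 1 False Q8]" |
  "msl M29 = [Done Q8, Pend 1 True Q7]" |
  "msl M30 = [Done Q8, Pend 1 True Q7, Pend 2 False Q3]" |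
  "msl M31 = [Done Q9, Pend 1 True Q3, Pend 2 True Q7]" |
  "msl M32 = [Pend 1 False Q15]" |
  "msl M33 = [Pend 2 False Q8]" |
  "msl M34 = [Done Q8, Pend 1 False Q16]" |
  "msl M35 = [Pend 1 True Q8]" |
  "msl M36 = [Pend 2 False Q11]" |
  "msl M37 = [Pend 1 False Q7]" |
  "msl M38 = [Done Q7, Pend 1 True Q11]" |
  "msl M39 = [Done Q7]" |
  "msl M40 = [Done Q11, Pend 1 False Q4]" |
  "msl M41 = [Done Q12, Pend 1 False Q13]" |
  "msl M42 = [Done Q13, Pend 1 True Q12, Pend 2 True Q4]" |
  "msl M43 = [Pend 1 False Q11]" |
  "msl M44 = [Done Q11]" |
  "msl M45 = [Done Q4, Pend 1 True Q11, Pend 2 False Q12]" |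
  "msl M46 = [Pend 1 False Q17]" |
  "msl M47 = [Pend 1 True Q12, Pend 2 True Q11]" |
  "msl M48 = [Done Q14, Pend 2 False Q7]" |
  "msl M49 = [Done Q15, Pend 2 False Q8]" |
  "msl M50 = [Done Q16, Pend 1 True Q8]" |
  "msl M51 = [Done Q14]" |
  "msl M52 = [Pend 2 False Q14]" |
  "msl M53 = [Done Q14, Pend 1 False Q16]" |
  "msl M54 = [Pend 1 True Q14]" |
  "msl M55 = [Done Q11, Pend 1 False Q7]" |
  "msl M56 = [Done Q12, Pend 1 False Q17]" |
  "msl M57 = [Done Q17, Pend 1 True Q12, Pend 2 True Q11]" |
  "msl M58 = [Done Q7, Pend 1 True Q11, Pend 2 False Q12]" |
  "msl M59 = [Done Q15, Pend 2 False Q14]" |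
  "msl M60 = [Done Q16, Pend 1 True Q14]"


lemma all_m: "m \<in> set all_m"
  by (cases m) (simp_all add: all_m_def)

lemma meta_check: "list_all (\<lambda>m. list_all (\<lambda>a. mp (mnext m a) = D (mp m) a \<and>
   mc (mnext m a) = min 2 (mc m + (if a then 1 else 0)) \<and>
   list_all (\<lambda>s. s \<in> set (succ (mp m) (msl m) a)) (msl (mnext m a))) [False, True]) all_m"
  by code_simp

lemma meta_final: "list_all (\<lambda>m. acc (mp m) \<and> mc m \<ge> 2 \<longrightarrow> list_ex (\<lambda>s. case s of Done q \<Rightarrow> acc q | Pend _ _ _ \<Rightarrow> False) (msl m)) all_m"
  unfolding acc_def by code_simp


definition mrun :: "bool list \<Rightarrow> mst" where
  "mrun w = foldl mnext M0 w"

fun valid :: "bool list \<Rightarrow> slot \<Rightarrow> bool" where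
  "valid c (Done q) = (\<exists>d. hop c d \<and> run Q0 d = q \<and> num_pegs d + 1 = num_pegs c)"
| "valid c (Pend k b q) = ((k = 1 \<or> k = 2) \<and> (\<exists>x. c = x @ take k (pat b) \<and> run Q0 (x @ take k (pat' b)) = q))"

lemma hop_snoc: "hop c d \<Longrightarrow> hop (c @ [a]) (d @ [a])"
proof -
  assume "hop c d"
  then obtain x y b where "c = x @ pat b @ y" "d = x @ pat' b @ y" using hop_split by blast
  then show ?thesis using hop_intro[of x b "y @ [a]"] by simp
qed

lemma pegs_pat: "num_pegs (pat b) = 2" "num_pegs (pat' b) = 1"
  by (cases b; simp add: pat_def pat'_def)+

lemma valid_step: "valid c s \<Longrightarrow> s' \<in> set (step_slot s a) \<Longrightarrow> valid (c @ [a]) s'"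
proof (cases s)
  case (Done q)
  assume "valid c s" "s' \<in> set (step_slot s a)"
  then obtain d where "hop c d" "run Q0 d = q" "num_pegs d + 1 = num_pegs c" using Done by auto
  moreover have "s' = Done (D q a)" using \<open>s' \<in> set (step_slot s a)\<close> Done by simp
  ultimately have "hop (c @ [a]) (d @ [a]) \<and> run Q0 (d @ [a]) = D q a \<and> num_pegs (d @ [a]) + 1 = num_pegs (c @ [a])"
    using hop_snoc by simp
  then show ?thesis using \<open>s' = Done (D q a)\<close> by (simp only: valid.simps) blast
next
  case (Pend k b q)
  assume v: "valid c s" and s': "s' \<in> set (step_slot s a)"
  from v Pend obtain x where k: "k = 1 \<or> k = 2" and c: "c = x @ take k (pat b)" and q: "run Q0 (x @ take k (pat' b)) = q"
    by auto
  have a: "a = pat b ! k" using s' Pend by (auto split: if_splits)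
  show ?thesis
  proof (cases "k = 2")
    case True
    then have s'': "s' = Done (D q (pat' b ! 2))" using s' Pend a by simp
    have "c @ [a] = x @ pat b @ []" using c a True by (cases b) (simp_all add: pat_def)
    moreover have "run Q0 (x @ pat' b @ []) = D q (pat' b ! 2)" using q True by (cases b) (simp_all add: pat'_def)
    moreover have "num_pegs (x @ pat' b @ []) + 1 = num_pegs (x @ pat b @ [])" using pegs_pat by simp
    ultimately show ?thesis using s'' hop_intro[of x b "[]"] by (metis valid.simps(1))
  next
    case False
    then have k1: "k = 1" using k by simp
    then have s'': "s' = Pend 2 b (D q (pat' b ! 1))" using s' Pend a by simp
    have "c @ [a] = x @ take 2 (pat b)" using c a k1 by (cases b) (simp_all add: pat_def)
    moreover have "run Q0 (x @ take 2 (pat' b)) = D q (pat' b ! 1)" using q k1 by (cases b) (simp_all add: pat'_def)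
    ultimately show ?thesis using s'' by auto
  qed
qed

lemma valid_succ: "run Q0 c = p \<Longrightarrow> \<forall>s\<in>set S. valid c s \<Longrightarrow> s' \<in> set (succ p S a) \<Longrightarrow> valid (c @ [a]) s'"
proof -
  assume p: "run Q0 c = p" and S: "\<forall>s\<in>set S. valid c s" and s': "s' \<in> set (succ p S a)"
  then consider (start) b where "b \<in> {True, False}" "a = pat b ! 0" "s' = Pend 1 b (D p (pat' b ! 0))"
    | (old) s where "s \<in> set S" "s' \<in> set (step_slot s a)"
    unfolding succ_def by (auto split: if_splits)
  then show ?thesis
  proof cases
    case start
    have "c @ [a] = c @ take 1 (pat b)" using start by (cases b) (simp_all add: pat_def)
    moreover have "run Q0 (c @ take 1 (pat' b)) = D p (pat' b ! 0)" using p by (cases b) (simp_all add: pat'_def)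
    ultimately show ?thesis using start by auto
  next
    case old then show ?thesis using S valid_step by blast
  qed
qed

lemma mrun_inv: "mp (mrun c) = run Q0 c \<and> mc (mrun c) = min 2 (num_pegs c) \<and> (\<forall>s\<in>set (msl (mrun c)). valid c s)"
proof (induction c rule: rev_induct)
  case Nil
  then show ?case by (simp add: mrun_def)
next
  case (snoc a c)
  let ?m = "mrun c"
  have chk: "mp (mnext ?m a) = D (mp ?m) a \<and> mc (mnext ?m a) = min 2 (mc ?m + (if a then 1 else 0)) \<and>
     (\<forall>s\<in>set (msl (mnext ?m a)). s \<in> set (succ (mp ?m) (msl ?m) a))"
    using meta_check all_m[of ?m] by (cases a) (auto simp: list_all_iff)
  have e: "mrun (c @ [a]) = mnext ?m a" by (simp add: mrun_def)
  show ?case unfolding e using chk snoc valid_succ[of c "mp ?m" "msl ?m" _ a] by auto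
qed

lemma completeness_step:
  assumes "acc (run Q0 c)" "num_pegs c \<ge> 2"
  shows "\<exists>d. hop c d \<and> acc (run Q0 d) \<and> num_pegs d + 1 = num_pegs c"
proof -
  let ?m = "mrun c"
  have i: "mp ?m = run Q0 c" "mc ?m = 2" "\<forall>s\<in>set (msl ?m). valid c s"
    using mrun_inv[of c] assms by auto
  have "list_ex (\<lambda>s. case s of Done q \<Rightarrow> acc q | Pend _ _ _ \<Rightarrow> False) (msl ?m)"
    using meta_final all_m[of ?m] i assms by (auto simp: list_all_iff)
  then obtain s where s: "s \<in> set (msl ?m)" "case s of Done q \<Rightarrow> acc q | Pend _ _ _ \<Rightarrow> False"
    unfolding list_ex_iff by blast
  obtain q where "s = Done q" "acc q" using s(2) by (cases s) auto
  then show ?thesis using i(3) s(1) by fastforce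
qed

lemma acc_reducible: "acc (run Q0 c) \<Longrightarrow> reducible_to_one c"
proof (induction "num_pegs c" arbitrary: c rule: less_induct)
  case less
  show ?case
  proof (cases "num_pegs c \<ge> 2")
    case True
    then obtain d where d: "hop c d" "acc (run Q0 d)" "num_pegs d + 1 = num_pegs c"
      using completeness_step less.prems by blast
    then have "reducible_to_one d" using less.hyps by simp
    then obtain e where "hop\<^sup>*\<^sup>* d e" "num_pegs e = 1" by (auto simp: reducible_to_one_def)
    then show ?thesis using d(1) unfolding reducible_to_one_def
      by (meson converse_rtranclp_into_rtranclp)
  next
    case False
    moreover have "num_pegs c \<noteq> 0"
    proof
      assume "num_pegs c = 0"
      then have "run Q0 c \<in> {Q0, Q1}" using run_zeros0 num_pegs_zero by blast
      then show False using less.prems by (auto simp: acc_def)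
    qed
    ultimately have "num_pegs c = 1" by simp
    then show ?thesis unfolding reducible_to_one_def by blast
  qed
qed

lemma reducible_iff: "reducible_to_one c \<longleftrightarrow> acc (run Q0 c)"
  using acc_reducible reducible_acc by blast

definition H :: "st \<Rightarrow> nat \<Rightarrow> bool list set" where
  "H q m = {w. w \<noteq> [] \<and> last w \<and> num_pegs w = m \<and> acc (run q (w @ [False]))}"
definition G :: "st \<Rightarrow> nat \<Rightarrow> bool list set" where
  "G q m = {w. (w = [] \<or> last w) \<and> num_pegs w = m \<and> acc (run q (w @ [False]))}"

lemma G_eq: "G q m = (if m = 0 \<and> acc (D q False) then {[]} else {}) \<union> H q m"
  unfolding G_def H_def by auto

lemma H_rec: "H q m = Cons False ` H (D q False) m \<union> (if m = 0 then {} else Cons True ` G (D q True) (m - 1))"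
proof (rule set_eqI)
  fix w
  show "w \<in> H q m \<longleftrightarrow> w \<in> Cons False ` H (D q False) m \<union> (if m = 0 then {} else Cons True ` G (D q True) (m - 1))"
  proof (cases w)
    case Nil then show ?thesis by (auto simp: H_def)
  next
    case (Cons a w')
    show ?thesis
    proof (cases a)
      case True
      then show ?thesis using Cons by (auto simp: H_def G_def)
    next
      case False
      then show ?thesis using Cons by (auto simp: H_def G_def)
    qed
  qed
qed

lemma card_H:
  assumes f0: "finite (H (D q False) m)" and f1: "m > 0 \<Longrightarrow> finite (H (D q True) (m - 1))"
  shows "finite (H q m) \<and> card (H q m) = card (H (D q False) m) +
     (if m = 0 then 0 else (if m = 1 \<and> acc (D (D q True) False) then 1 else 0) + card (H (D q True) (m - 1)))"
proof (cases "m = 0")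
  case True
  have e: "H q 0 = Cons False ` H (D q False) 0" using H_rec[of q 0] by simp
  show ?thesis using f0 True by (simp add: e card_image)
next
  case False
  have nH: "[] \<notin> H r k" for r k by (simp add: H_def)
  have fG: "finite (G (D q True) (m - 1))" using f1 False by (simp add: G_eq)
  have cG: "card (G (D q True) (m - 1)) = (if m = 1 \<and> acc (D (D q True) False) then 1 else 0) + card (H (D q True) (m - 1))"
    using f1 False nH by (auto simp: G_eq card_insert_if)
  have disj: "Cons False ` H (D q False) m \<inter> Cons True ` G (D q True) (m - 1) = {}" by auto
  have "H q m = Cons False ` H (D q False) m \<union> Cons True ` G (D q True) (m - 1)"
    using False by (simp add: H_rec[of q m])
  moreover have "card (Cons False ` H (D q False) m \<union> Cons True ` G (D q True) (m - 1)) =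
     card (H (D q False) m) + card (G (D q True) (m - 1))"
    using f0 fG disj by (simp add: card_Un_disjoint card_image)
  ultimately show ?thesis using f0 fG cG False by simp
qed

fun F :: "st \<Rightarrow> nat \<Rightarrow> int" where
  "F Q3 m = (if m < 3 then int m else if even m then 4 * int (m div 2)^2 - 10 * int (m div 2) + 10
             else 4 * int (m div 2)^2 - 6 * int (m div 2) + 5)"
| "F Q4 m = int (m div 2)"
| "F Q6 m = (if m < 2 then int m else if even m then 4 * int (m div 2)^2 - 7 * int (m div 2) + 5
             else 4 * int (m div 2)^2 - 3 * int (m div 2) + 3)"
| "F Q8 m = int ((m + 1) div 2)"
| "F Q9 m = (if m \<ge> 2 then 3 * int (m div 2) - 2 else 0)"
| "F Q11 m = (if m \<ge> 2 then 1 else 0)"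
| "F Q12 m = (if m \<ge> 4 then 1 else 0)"
| "F Q13 m = (if m \<ge> 3 then 3 * int ((m - 1) div 2) else if m \<ge> 1 then 1 else 0)"
| "F Q14 m = (if m \<ge> 1 then 1 else 0)"
| "F Q15 m = (if m \<ge> 3 then 1 else 0)"
| "F Q16 m = (if m \<ge> 2 then 2 * int (m div 2) - 1 else 0)"
| "F Q17 m = (if m \<ge> 3 then 2 * int ((m - 1) div 2) else if m \<ge> 1 then 1 else 0)"
| "F _ m = 0"

definition RF :: "st \<Rightarrow> nat \<Rightarrow> bool" where
  "RF q m \<longleftrightarrow> F q m = F (D q False) m +
     (if m = 0 then 0 else (if m = 1 \<and> acc (D (D q True) False) then 1 else 0) + F (D q True) (m - 1))"

lemma parity_cases:
  fixes m :: nat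
  obtains "m = 0" | j :: nat where "m = 2 * j + 1" | j :: nat where "m = 2 * j + 2"
proof (cases m)
  case 0 then show ?thesis using that by simp
next
  case (Suc m')
  then show ?thesis using that by (cases "even m'") (auto elim!: evenE oddE)
qed

lemma aux_div: "3 \<le> j * 2 \<Longrightarrow> int ((j * 2 - Suc 0) div 2) = int j - 1"
  by (cases j) auto

lemma RF_Q3: "RF Q3 m"
  apply (cases m rule: parity_cases)
    apply (auto simp: RF_def acc_def algebra_simps power2_eq_square)
  apply ((simp_all add: aux_div)?)
  done

lemma RF_Q4: "RF Q4 m"
  apply (cases m rule: parity_cases)
    apply (auto simp: RF_def acc_def algebra_simps power2_eq_square)
  apply ((simp_all add: aux_div)?)
  done

lemma RF_Q6: "RF Q6 m"
  apply (cases m rule: parity_cases)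
    apply (auto simp: RF_def acc_def algebra_simps power2_eq_square)
  apply ((simp_all add: aux_div)?)
  done

lemma RF_Q8: "RF Q8 m"
  apply (cases m rule: parity_cases)
    apply (auto simp: RF_def acc_def algebra_simps power2_eq_square)
  apply ((simp_all add: aux_div)?)
  done

lemma RF_Q9: "RF Q9 m"
  apply (cases m rule: parity_cases)
    apply (auto simp: RF_def acc_def algebra_simps power2_eq_square)
  apply ((simp_all add: aux_div)?)
  done

lemma RF_Q11: "RF Q11 m"
  apply (cases m rule: parity_cases)
    apply (auto simp: RF_def acc_def algebra_simps power2_eq_square)
  apply ((simp_all add: aux_div)?)
  done

lemma RF_Q12: "RF Q12 m"
  apply (cases m rule: parity_cases)
    apply (auto simp: RF_def acc_def algebra_simps power2_eq_square)
  apply ((simp_all add: aux_div)?)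
  done

lemma RF_Q13: "RF Q13 m"
  apply (cases m rule: parity_cases)
    apply (auto simp: RF_def acc_def algebra_simps power2_eq_square)
  apply ((simp_all add: aux_div)?)
  done

lemma RF_Q14: "RF Q14 m"
  apply (cases m rule: parity_cases)
    apply (auto simp: RF_def acc_def algebra_simps power2_eq_square)
  apply ((simp_all add: aux_div)?)
  done

lemma RF_Q15: "RF Q15 m"
  apply (cases m rule: parity_cases)
    apply (auto simp: RF_def acc_def algebra_simps power2_eq_square)
  apply ((simp_all add: aux_div)?)
  done

lemma RF_Q16: "RF Q16 m"
  apply (cases m rule: parity_cases)
    apply (auto simp: RF_def acc_def algebra_simps power2_eq_square)
  apply ((simp_all add: aux_div)?)
  done

lemma RF_Q17: "RF Q17 m"
  apply (cases m rule: parity_cases)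
    apply (auto simp: RF_def acc_def algebra_simps power2_eq_square)
  apply ((simp_all add: aux_div)?)
  done


lemma run_Q10: "run Q10 w = Q10"
  by (induction w) auto

lemma run_Q7: "True \<in> set w \<Longrightarrow> run Q7 w = Q10"
  by (induction w) (auto simp: run_Q10)

lemma H_Q10: "H Q10 m = {}"
  by (auto simp: H_def run_Q10 acc_def)

lemma H_Q7: "H Q7 m = {}"
proof -
  have "run Q7 (w @ [False]) = Q10" if "w \<noteq> []" "last w" for w
    using run_Q7[of "w @ [False]"] that last_in_set[of w] by auto
  then show ?thesis by (auto simp: H_def acc_def)
qed

definition QS :: "st set" where
  "QS = {Q3,Q4,Q6,Q7,Q8,Q9,Q10,Q11,Q12,Q13,Q14,Q15,Q16,Q17}"

lemma QS_closed: "q \<in> QS \<Longrightarrow> D q a \<in> QS"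
  unfolding QS_def by (elim insertE) (auto)

lemma H_count: "q \<in> QS \<Longrightarrow> finite (H q m) \<and> int (card (H q m)) = F q m"
proof (induction m arbitrary: q rule: less_induct)
  case (less m)
  have IH: "finite (H r (m - 1)) \<and> int (card (H r (m - 1))) = F r (m - 1)" if "m > 0" "r \<in> QS" for r
    using less.IH that by simp
  have step: "finite (H q m) \<and> int (card (H q m)) = F q m"
    if q: "q \<in> QS" and h0: "finite (H (D q False) m) \<and> int (card (H (D q False) m)) = F (D q False) m"
      and r: "RF q m" for q
  proof -
    have h1: "m > 0 \<Longrightarrow> finite (H (D q True) (m - 1)) \<and> int (card (H (D q True) (m - 1))) = F (D q True) (m - 1)"
      using IH QS_closed[OF q] by blast
    have c: "finite (H q m) \<and> card (H q m) = card (H (D q False) m) +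
     (if m = 0 then 0 else (if m = 1 \<and> acc (D (D q True) False) then 1 else 0) + card (H (D q True) (m - 1)))"
      using card_H[of q m] h0 h1 by blast
    show ?thesis
    proof (cases "m = 0")
      case True then show ?thesis using c h0 r by (simp add: RF_def)
    next
      case False then show ?thesis using c h0 h1 r by (simp add: RF_def)
    qed
  qed
  have q10: "finite (H Q10 m) \<and> int (card (H Q10 m)) = F Q10 m" by (simp add: H_Q10)
  have q7: "finite (H Q7 m) \<and> int (card (H Q7 m)) = F Q7 m" by (simp add: H_Q7)
  have q11: "finite (H Q11 m) \<and> int (card (H Q11 m)) = F Q11 m" using step[of Q11] q10 RF_Q11 by (simp add: QS_def)
  have q12: "finite (H Q12 m) \<and> int (card (H Q12 m)) = F Q12 m" using step[of Q12] q10 RF_Q12 by (simp add: QS_def)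
  have q15: "finite (H Q15 m) \<and> int (card (H Q15 m)) = F Q15 m" using step[of Q15] q10 RF_Q15 by (simp add: QS_def)
  have q14: "finite (H Q14 m) \<and> int (card (H Q14 m)) = F Q14 m" using step[of Q14] q11 RF_Q14 by (simp add: QS_def)
  have q8: "finite (H Q8 m) \<and> int (card (H Q8 m)) = F Q8 m" using step[of Q8] q11 RF_Q8 by (simp add: QS_def)
  have q4: "finite (H Q4 m) \<and> int (card (H Q4 m)) = F Q4 m" using step[of Q4] q7 RF_Q4 by (simp add: QS_def)
  have q3: "finite (H Q3 m) \<and> int (card (H Q3 m)) = F Q3 m" using step[of Q3] q4 RF_Q3 by (simp add: QS_def)
  have q6: "finite (H Q6 m) \<and> int (card (H Q6 m)) = F Q6 m" using step[of Q6] q3 RF_Q6 by (simp add: QS_def)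
  have q9: "finite (H Q9 m) \<and> int (card (H Q9 m)) = F Q9 m" using step[of Q9] q12 RF_Q9 by (simp add: QS_def)
  have q13: "finite (H Q13 m) \<and> int (card (H Q13 m)) = F Q13 m" using step[of Q13] q8 RF_Q13 by (simp add: QS_def)
  have q16: "finite (H Q16 m) \<and> int (card (H Q16 m)) = F Q16 m" using step[of Q16] q12 RF_Q16 by (simp add: QS_def)
  have q17: "finite (H Q17 m) \<and> int (card (H Q17 m)) = F Q17 m" using step[of Q17] q14 RF_Q17 by (simp add: QS_def)
  from less.prems show ?case unfolding QS_def
    using q3 q4 q6 q7 q8 q9 q10 q11 q12 q13 q14 q15 q16 q17 by (elim insertE) auto
qed

lemma N_set: "n \<ge> 1 \<Longrightarrow> {u. u \<noteq> [] \<and> hd u \<and> last u \<and> num_pegs u = n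
                 \<and> reducible_to_one ([False] @ u @ [False])} = Cons True ` G Q3 (n - 1)"
proof (rule set_eqI)
  fix u assume n: "n \<ge> 1"
  show "u \<in> {u. u \<noteq> [] \<and> hd u \<and> last u \<and> num_pegs u = n
                 \<and> reducible_to_one ([False] @ u @ [False])} \<longleftrightarrow> u \<in> Cons True ` G Q3 (n - 1)"
  proof (cases u)
    case Nil then show ?thesis by auto
  next
    case (Cons a w)
    then show ?thesis using n by (cases a) (auto simp: reducible_iff G_def)
  qed
qed

lemma N_formula: "n \<ge> 1 \<Longrightarrow> int (N n) = (if n = 1 then 1 else 0) + F Q3 (n - 1)"
proof -
  assume n: "n \<ge> 1"
  have "N n = card (G Q3 (n - 1))" unfolding N_def N_set[OF n] by (simp add: card_image)
  also have "\<dots> = (if n = 1 then 1 else 0) + card (H Q3 (n - 1))"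
  proof -
    have fin: "finite (H Q3 (n - 1))" using H_count[of Q3 "n - 1"] by (simp add: QS_def)
    have ne: "[] \<notin> H Q3 (n - 1)" by (simp add: H_def)
    have a4: "acc (D Q3 False)" by (simp add: acc_def)
    show ?thesis
    proof (cases "n = 1")
      case True then show ?thesis using fin ne a4 by (simp add: G_eq)
    next
      case False then show ?thesis using n by (simp add: G_eq)
    qed
  qed
  finally show ?thesis using H_count[of Q3 "n - 1"] by (simp add: QS_def)
qed

theorem mainTheorem2:
  fixes n :: nat
  assumes "n \<ge> 1"
  shows "int (N n) =
    (if n = 1 then 1
     else if n = 2 then 1
     else if n = 3 then 2
     else if even n then (int n)^2 - 7 * int n + 15
     else (int n)^2 - 7 * int n + 16)"
  using assms
  by (cases n rule: parity_cases) (auto simp: N_formula algebra_simps power2_eq_square)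

end
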